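(* Let $\mathcal{B}$ be an AF $C^*$-algebra and $\mathcal{A}$ a canonical subalgebra of $\mathcal{B}$. If $\delta:\mathcal{A}\to\mathcal{B}$ is a bounded linear map with $(m+n+l)\delta(A^2)=m\delta(A)A+nA\delta(A)+lA\delta(I)A$ for all $A\in\mathcal{A}$, then $\delta(AB)=\delta(A)B=A\delta(B)$ for all $A,B\in\mathcal{A}$.
   Context: Fixed integers $m,n,l\ge 0$ satisfy $m+l\ge1$ and $n+l\ge1$. A unital $C^*$-algebra $\mathcal{B}$ is AF if it contains an increasing chain $\mathcal{B}_1\subseteq\mathcal{B}_2\subseteq\cdots$ of finite-dimensional $C^*$-subalgebras, each containing the unit $I$, whose union is norm dense. A canonical subalgebra $\mathcal{A}$ of $\mathcal{B}$ is a norm-closed subalgebra such that, for such a chain with compatible systems of matrix units (each $\mathcal{B}_k\cong M_{n_1}(\mathbb{C})\oplus\cdots\oplus M_{n_r}(\mathbb{C})$), each $\mathcal{A}_k=\mathcal{A}\cap\mathcal{B}_k$ is a CSL subalgebra of $\mathcal{B}_k$ (containing the diagonal matrix units and spanned by the matrix units it contains) and $\bigcup_k\mathcal{A}_k$ is norm dense in $\mathcal{A}$. *)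

theory Defs
  imports "HOL-Analysis.Analysis"
begin

text \<open>Complex scalar multiplication is an explicit
  operation cmult compatible with the real scalar multiplication of the normed algebra.\<close>

class cstar_algebra = banach + real_normed_algebra_1 +
  fixes cmult :: "complex \<Rightarrow> 'a \<Rightarrow> 'a"
    and adj :: "'a \<Rightarrow> 'a"
  assumes cmult_add_right: "cmult a (x + y) = cmult a x + cmult a y"
    and cmult_add_left: "cmult (a + b) x = cmult a x + cmult b x"
    and cmult_cmult: "cmult a (cmult b x) = cmult (a * b) x"
    and cmult_one: "cmult 1 x = x"
    and scaleR_cmult: "scaleR r x = cmult (complex_of_real r) x"
    and norm_cmult: "norm (cmult a x) = cmod a * norm x"
    and mult_cmult_left: "cmult a x * y = cmult a (x * y)"
    and mult_cmult_right: "x * cmult a y = cmult a (x * y)"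
    and adj_add: "adj (x + y) = adj x + adj y"
    and adj_cmult: "adj (cmult a x) = cmult (cnj a) (adj x)"
    and adj_mult: "adj (x * y) = adj y * adj x"
    and adj_adj: "adj (adj x) = x"
    and cstar_identity: "norm (adj x * x) = norm x ^ 2"

definition cspan :: "'a::cstar_algebra set \<Rightarrow> 'a set" where
  "cspan S = {x. \<exists>F c. finite F \<and> F \<subseteq> S \<and> x = (\<Sum>s\<in>F. cmult (c s) s)}"

definition complex_subalgebra :: "'a::cstar_algebra set \<Rightarrow> bool" where
  "complex_subalgebra A \<longleftrightarrow> 0 \<in> A \<and>
     (\<forall>x\<in>A. \<forall>y\<in>A. x + y \<in> A) \<and>
     (\<forall>c. \<forall>x\<in>A. cmult c x \<in> A) \<and>
     (\<forall>x\<in>A. \<forall>y\<in>A. x * y \<in> A)"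

text \<open>Index set of a system of matrix units for
  M_{d 0}(C) + ... + M_{d (r-1)}(C): triples (s,i,j) with s < r, i,j < d s.\<close>

definition mu_idx :: "nat \<Rightarrow> (nat \<Rightarrow> nat) \<Rightarrow> (nat \<times> nat \<times> nat) set" where
  "mu_idx r d = {(s, i, j). s < r \<and> i < d s \<and> j < d s}"

definition mu_diag :: "nat \<Rightarrow> (nat \<Rightarrow> nat) \<Rightarrow> (nat \<times> nat \<times> nat) set" where
  "mu_diag r d = {(s, i, j). s < r \<and> i < d s \<and> j = i}"

text \<open>e is a (unital) system of matrix units of type (d 0, ..., d (r-1)); its complex span
  is then a finite-dimensional C*-subalgebra containing I and *-isomorphic to
  M_{d 0}(C) + ... + M_{d (r-1)}(C).\<close>

definition matrix_units :: "nat \<Rightarrow> (nat \<Rightarrow> nat) \<Rightarrow> (nat \<times> nat \<times> nat \<Rightarrow> 'a::cstar_algebra) \<Rightarrow> bool" where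
  "matrix_units r d e \<longleftrightarrow>
     (\<forall>s<r. 1 \<le> d s) \<and>
     (\<forall>p\<in>mu_idx r d. e p \<noteq> 0) \<and>
     (\<forall>s i j s' i' j'. (s, i, j) \<in> mu_idx r d \<longrightarrow> (s', i', j') \<in> mu_idx r d \<longrightarrow>
         e (s, i, j) * e (s', i', j') = (if s = s' \<and> j = i' then e (s, i, j') else 0)) \<and>
     (\<forall>s i j. (s, i, j) \<in> mu_idx r d \<longrightarrow> adj (e (s, i, j)) = e (s, j, i)) \<and>
     sum e (mu_diag r d) = 1"

text \<open>An AF presentation: an increasing chain of finite-dimensional C*-subalgebras
  B_k = cspan (e k ` mu_idx (r k) (d k)), each unital (sum of diagonal units is I),
  with compatible systems of matrix units (every matrix unit of B_k is a sum of matrix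
  units of B_(k+1)), and norm-dense union.\<close>

definition af_block :: "(nat \<Rightarrow> nat) \<Rightarrow> (nat \<Rightarrow> nat \<Rightarrow> nat) \<Rightarrow>
    (nat \<Rightarrow> nat \<times> nat \<times> nat \<Rightarrow> 'a::cstar_algebra) \<Rightarrow> nat \<Rightarrow> 'a set" where
  "af_block r d e k = cspan (e k ` mu_idx (r k) (d k))"

definition af_system :: "(nat \<Rightarrow> nat) \<Rightarrow> (nat \<Rightarrow> nat \<Rightarrow> nat) \<Rightarrow>
    (nat \<Rightarrow> nat \<times> nat \<times> nat \<Rightarrow> 'a::cstar_algebra) \<Rightarrow> bool" where
  "af_system r d e \<longleftrightarrow>
     (\<forall>k. matrix_units (r k) (d k) (e k)) \<and>
     (\<forall>k. af_block r d e k \<subseteq> af_block r d e (Suc k)) \<and>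
     (\<forall>k. \<forall>p\<in>mu_idx (r k) (d k). \<exists>F. F \<subseteq> mu_idx (r (Suc k)) (d (Suc k)) \<and>
          e k p = sum (e (Suc k)) F) \<and>
     closure (\<Union>k. af_block r d e k) = UNIV"

definition AF_algebra :: "'a::cstar_algebra itself \<Rightarrow> bool" where
  "AF_algebra _ \<longleftrightarrow> (\<exists>r d (e :: nat \<Rightarrow> nat \<times> nat \<times> nat \<Rightarrow> 'a). af_system r d e)"

text \<open>Canonical subalgebra: norm-closed subalgebra A such that, for some AF presentation
  with compatible matrix units, each A_k = A \<inter> B_k contains the diagonal matrix units
  and is spanned by the matrix units it contains (a CSL subalgebra of B_k), and the
  union of the A_k is norm dense in A.\<close>

definition canonical_subalgebra :: "'a::cstar_algebra set \<Rightarrow> bool" where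
  "canonical_subalgebra A \<longleftrightarrow> complex_subalgebra A \<and> closed A \<and>
     (\<exists>r d e. af_system r d e \<and>
        (\<forall>k. e k ` mu_diag (r k) (d k) \<subseteq> A) \<and>
        (\<forall>k. A \<inter> af_block r d e k = cspan (e k ` mu_idx (r k) (d k) \<inter> A)) \<and>
        closure (\<Union>k. A \<inter> af_block r d e k) = A)"

end

theory Submission imports Defs begin
lemma lin_lemma:
  fixes c a d da2 :: "'a::real_algebra_1" and m n l :: real
  assumes h1: "(m+n+l) *\<^sub>R (da2 + 2 *\<^sub>R d + c) = m *\<^sub>R ((d + c)*(a+1)) + n *\<^sub>R ((a+1)*(d+c)) + l *\<^sub>R ((a+1)*c*(a+1))"
  and h2: "(m+n+l) *\<^sub>R da2 = m *\<^sub>R (d*a) + n *\<^sub>R (a*d) + l *\<^sub>R (a*c*a)"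
  shows "(m+n+2*l) *\<^sub>R d = (m+l) *\<^sub>R (c*a) + (n+l) *\<^sub>R (a*c)"
proof -
  have "(m+n+l) *\<^sub>R da2 + (2*(m+n+l)) *\<^sub>R d + (m+n+l) *\<^sub>R c = m *\<^sub>R (d*a) + n *\<^sub>R (a*d) + l *\<^sub>R (a*c*a) + (m + n) *\<^sub>R d + (m+l) *\<^sub>R (c*a) + (n+l) *\<^sub>R (a*c) + (m+n+l) *\<^sub>R c"
    using h1 by (simp add: algebra_simps scaleR_add_right scaleR_add_left)
  hence "(2*(m+n+l)) *\<^sub>R d = (m + n) *\<^sub>R d + (m+l) *\<^sub>R (c*a) + (n+l) *\<^sub>R (a*c)"
    unfolding h2 by (simp add: add.assoc)
  moreover have "(2*(m+n+l)) *\<^sub>R d = (m + n) *\<^sub>R d + (m+n+2*l) *\<^sub>R d"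
    by (simp only: scaleR_add_left[symmetric]) (simp add: algebra_simps)
  ultimately show ?thesis by (metis add.assoc add_left_cancel)
qed

lemma quad_lemma:
  fixes c a d da2 :: "'a::real_algebra_1" and m n l :: real
  assumes t: "(m+n+2*l) *\<^sub>R d = (m+l) *\<^sub>R (c*a) + (n+l) *\<^sub>R (a*c)"
  and t2: "(m+n+2*l) *\<^sub>R da2 = (m+l) *\<^sub>R (c*(a*a)) + (n+l) *\<^sub>R ((a*a)*c)"
  and h2: "(m+n+l) *\<^sub>R da2 = m *\<^sub>R (d*a) + n *\<^sub>R (a*d) + l *\<^sub>R (a*c*a)"
  shows "((m+l)*(n+l)) *\<^sub>R (c*(a*a) + (a*a)*c) = ((m+l)*(n+l)) *\<^sub>R (2 *\<^sub>R (a*c*a))"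
proof -
  have "(m+n+l) *\<^sub>R ((m+n+2*l) *\<^sub>R da2) = (m+n+2*l) *\<^sub>R ((m+n+l) *\<^sub>R da2)" by simp
  also have "(m+n+2*l) *\<^sub>R ((m+n+l) *\<^sub>R da2) = m *\<^sub>R (((m+n+2*l) *\<^sub>R d)*a) + n *\<^sub>R (a*((m+n+2*l) *\<^sub>R d)) + ((m+n+2*l)*l) *\<^sub>R (a*c*a)"
    unfolding h2 by (simp add: algebra_simps)
  finally have e: "(m+n+l) *\<^sub>R ((m+l) *\<^sub>R (c*(a*a)) + (n+l) *\<^sub>R ((a*a)*c)) = m *\<^sub>R (((m+l) *\<^sub>R (c*a) + (n+l) *\<^sub>R (a*c))*a) + n *\<^sub>R (a*((m+l) *\<^sub>R (c*a) + (n+l) *\<^sub>R (a*c))) + ((m+n+2*l)*l) *\<^sub>R (a*c*a)"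
    unfolding t t2 .
  have y1: "(m+n+l) *\<^sub>R ((m+l) *\<^sub>R (c*(a*a)) + (n+l) *\<^sub>R ((a*a)*c)) = ((m+n+l)*(m+l)) *\<^sub>R (c*(a*a)) + ((m+n+l)*(n+l)) *\<^sub>R ((a*a)*c)"
    by (simp add: scaleR_add_right)
  have y2: "m *\<^sub>R (((m+l) *\<^sub>R (c*a) + (n+l) *\<^sub>R (a*c))*a) + n *\<^sub>R (a*((m+l) *\<^sub>R (c*a) + (n+l) *\<^sub>R (a*c))) + ((m+n+2*l)*l) *\<^sub>R (a*c*a)
     = (m*(m+l)) *\<^sub>R (c*(a*a)) + (n*(n+l)) *\<^sub>R ((a*a)*c) + ((m*(n+l)) *\<^sub>R (a*c*a) + (n*(m+l)) *\<^sub>R (a*c*a) + ((m+n+2*l)*l) *\<^sub>R (a*c*a))"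
    by (simp add: scaleR_add_right distrib_right distrib_left mult.assoc add_ac)
  have y3: "(m*(n+l)) *\<^sub>R (a*c*a) + (n*(m+l)) *\<^sub>R (a*c*a) + ((m+n+2*l)*l) *\<^sub>R (a*c*a) = (m*(n+l) + n*(m+l) + (m+n+2*l)*l) *\<^sub>R (a*c*a)"
    by (simp only: scaleR_add_left[symmetric])
  have e2: "((m+n+l)*(m+l)) *\<^sub>R (c*(a*a)) + ((m+n+l)*(n+l)) *\<^sub>R ((a*a)*c) = (m*(m+l)) *\<^sub>R (c*(a*a)) + (n*(n+l)) *\<^sub>R ((a*a)*c) + (m*(n+l) + n*(m+l) + (m+n+2*l)*l) *\<^sub>R (a*c*a)"
    using e unfolding y1 y2 y3 .
  have x1: "((m+n+l)*(m+l)) *\<^sub>R (c*(a*a)) = (m*(m+l)) *\<^sub>R (c*(a*a)) + ((m+l)*(n+l)) *\<^sub>R (c*(a*a))"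
    by (simp only: scaleR_add_left[symmetric]) (simp add: algebra_simps)
  have x2: "((m+n+l)*(n+l)) *\<^sub>R ((a*a)*c) = (n*(n+l)) *\<^sub>R ((a*a)*c) + ((m+l)*(n+l)) *\<^sub>R ((a*a)*c)"
    by (simp only: scaleR_add_left[symmetric]) (simp add: algebra_simps)
  have "((m+l)*(n+l)) *\<^sub>R (c*(a*a) + (a*a)*c) = ((m+n+l)*(m+l)) *\<^sub>R (c*(a*a)) + ((m+n+l)*(n+l)) *\<^sub>R ((a*a)*c) - (m*(m+l)) *\<^sub>R (c*(a*a)) - (n*(n+l)) *\<^sub>R ((a*a)*c)"
    unfolding x1 x2 by (simp add: scaleR_add_right)
  also have "\<dots> = (m*(n+l) + n*(m+l) + (m+n+2*l)*l) *\<^sub>R (a*c*a)"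
    unfolding e2 by simp
  also have "\<dots> = ((m+l)*(n+l)) *\<^sub>R (2 *\<^sub>R (a*c*a))"
    by (simp add: algebra_simps)
  finally show ?thesis .
qed
lemma proj_comm:
  fixes c p :: "'a::real_algebra_1"
  assumes pp: "p*p = p" and h: "c*(p*p) + (p*p)*c = 2 *\<^sub>R (p*c*p)"
  shows "c*p = p*c"
proof -
  have h': "c*p + p*c = p*c*p + p*c*p" using h pp by (simp add: scaleR_2)
  have "p*(c*p + p*c) = p*(p*c*p + p*c*p)" using h' by simp
  hence "p*c*p + p*c = p*c*p + p*c*p" using pp by (simp add: distrib_left mult.assoc[symmetric])
  hence 1: "p*c = p*c*p" by simp
  have "(c*p + p*c)*p = (p*c*p + p*c*p)*p" using h' by simp
  hence "c*p + p*c*p = p*c*p + p*c*p" using pp by (simp add: distrib_right mult.assoc)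
  hence 2: "c*p = p*c*p" by simp
  show ?thesis using 1 2 by simp
qed

lemma off_comm:
  fixes c x q :: "'a::real_algebra_1"
  assumes xx: "x*x = 0" and qq: "q*q = q" and xq: "x*q = x" and qx: "q*x = 0" and cq: "c*q = q*c"
  and hx: "c*(x*x) + (x*x)*c = 2 *\<^sub>R (x*c*x)"
  and hxq: "c*((x+q)*(x+q)) + ((x+q)*(x+q))*c = 2 *\<^sub>R ((x+q)*c*(x+q))"
  shows "c*x = x*c"
proof -
  have xcx: "x*c*x = 0" using hx xx by simp
  have sq: "(x+q)*(x+q) = x + q" using xx qq xq qx by (simp add: distrib_left distrib_right)
  have "(x+q)*c*(x+q) = x*c*x + x*c*q + q*c*x + q*c*q" by (simp add: distrib_left distrib_right add.assoc)
  also have "x*c*q = x*c" using cq xq by (metis mult.assoc)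
  also have "q*c*x = 0" using cq qx by (metis mult.assoc mult_zero_right)
  also have "q*c*q = q*c" using cq qq by (metis mult.assoc)
  finally have e: "(x+q)*c*(x+q) = x*c + q*c" using xcx by simp
  have "c*x + c*q + (x*c + q*c) = (x*c + q*c) + (x*c + q*c)"
    using hxq unfolding sq e by (simp add: scaleR_2 distrib_left distrib_right)
  thus ?thesis using cq by (simp add: algebra_simps)
qed

lemma sub_sum:
  assumes "complex_subalgebra A" "\<forall>x\<in>F. f x \<in> A"
  shows "sum f F \<in> A"
proof (cases "finite F")
  case True
  then show ?thesis using assms(2)
    by (induction F rule: finite_induct) (use assms(1) in \<open>auto simp: complex_subalgebra_def\<close>)
next
  case False
  then show ?thesis using assms(1) by (simp add: complex_subalgebra_def)
qed

theorem theorem3p8: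
  fixes m n l :: nat
    and \<A> :: "'a::cstar_algebra set"
    and \<delta> :: "'a \<Rightarrow> 'a"
  assumes "m + l \<ge> 1" and "n + l \<ge> 1"
    and "AF_algebra TYPE('a)"
    and "canonical_subalgebra \<A>"
    and "\<forall>x\<in>\<A>. \<forall>y\<in>\<A>. \<delta> (x + y) = \<delta> x + \<delta> y"
    and "\<forall>c. \<forall>x\<in>\<A>. \<delta> (cmult c x) = cmult c (\<delta> x)"
    and "\<exists>K. \<forall>x\<in>\<A>. norm (\<delta> x) \<le> K * norm x"
    and "\<forall>a\<in>\<A>. real (m + n + l) *\<^sub>R \<delta> (a * a) =
           real m *\<^sub>R (\<delta> a * a) + real n *\<^sub>R (a * \<delta> a) + real l *\<^sub>R (a * \<delta> 1 * a)"
  shows "\<forall>a\<in>\<A>. \<forall>b\<in>\<A>. \<delta> (a * b) = \<delta> a * b \<and> \<delta> a * b = a * \<delta> b"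
proof -
  note add = assms(5) and H = assms(8)
  have all4: "complex_subalgebra \<A> \<and> closed \<A> \<and> (\<exists>r d e. af_system r d e \<and>
        (\<forall>k. e k ` mu_diag (r k) (d k) \<subseteq> \<A>) \<and>
        (\<forall>k. \<A> \<inter> af_block r d e k = cspan (e k ` mu_idx (r k) (d k) \<inter> \<A>)) \<and>
        closure (\<Union>k. \<A> \<inter> af_block r d e k) = \<A>)"
    using assms(4) unfolding canonical_subalgebra_def .
  note sub = conjunct1[OF all4]
  note ex = conjunct2[OF conjunct2[OF all4]]
  from ex obtain r d e where all: "af_system r d e \<and>
        (\<forall>k. e k ` mu_diag (r k) (d k) \<subseteq> \<A>) \<and>
        (\<forall>k. \<A> \<inter> af_block r d e k = cspan (e k ` mu_idx (r k) (d k) \<inter> \<A>)) \<and>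
        closure (\<Union>k. \<A> \<inter> af_block r d e k) = \<A>" by (elim exE)
  note af = conjunct1[OF all]
  note diag = conjunct1[OF conjunct2[OF all]]
  note blk = conjunct1[OF conjunct2[OF conjunct2[OF all]]]
  note dense = conjunct2[OF conjunct2[OF conjunct2[OF all]]]
  have addA: "x + y \<in> \<A>" if "x \<in> \<A>" "y \<in> \<A>" for x y using sub that unfolding complex_subalgebra_def by blast
  have mulA: "x * y \<in> \<A>" if "x \<in> \<A>" "y \<in> \<A>" for x y using sub that unfolding complex_subalgebra_def by blast
  have mu_all: "\<forall>k. matrix_units (r k) (d k) (e k)" using af unfolding af_system_def by (rule conjunct1)
  have mu: "matrix_units (r k) (d k) (e k)" for k using mu_all by (rule spec)
  have one: "1 \<in> \<A>"
  proof -
    have "\<forall>x\<in>mu_diag (r 0) (d 0). e 0 x \<in> \<A>" using spec[OF diag, of 0] by (simp add: image_subset_iff)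
    hence "sum (e 0) (mu_diag (r 0) (d 0)) \<in> \<A>"
      by (rule sub_sum[OF sub])
    thus ?thesis using mu[of 0] unfolding matrix_units_def by simp
  qed
  define c where "c = \<delta> 1"
  define t where "t = real m + real n + 2 * real l"
  have tpos: "t > 0" using assms(1) unfolding t_def by simp
  have Hx: "(real m + real n + real l) *\<^sub>R \<delta> (x*x) = real m *\<^sub>R (\<delta> x*x) + real n *\<^sub>R (x*\<delta> x) + real l *\<^sub>R (x*c*x)"
    if x: "x \<in> \<A>" for x
    using H x unfolding c_def by simp
  have lin: "t *\<^sub>R \<delta> a = (real m + real l) *\<^sub>R (c*a) + (real n + real l) *\<^sub>R (a*c)" if a: "a \<in> \<A>" for a
  proof -
    have a1: "a + 1 \<in> \<A>" using a one addA by blast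
    have aa: "a*a \<in> \<A>" using a mulA by blast
    have a2: "a + a \<in> \<A>" using a addA by blast
    have sq: "(a+1)*(a+1) = a*a + (a + a) + 1" by (simp add: algebra_simps)
    have eq1: "\<delta> ((a+1)*(a+1)) = \<delta> (a*a) + 2 *\<^sub>R \<delta> a + c"
    proof -
      have "\<delta> (a*a + (a + a) + 1) = \<delta> (a*a + (a + a)) + \<delta> 1" using add addA[OF aa a2] one by blast
      also have "\<delta> (a*a + (a + a)) = \<delta> (a*a) + \<delta> (a + a)" using add aa a2 by blast
      also have "\<delta> (a + a) = 2 *\<^sub>R \<delta> a" using add a by (simp add: scaleR_2)
      finally show ?thesis unfolding sq c_def .
    qed
    have eq2: "\<delta> (a+1) = \<delta> a + c" using add a one unfolding c_def by simp
    have h1: "(real m + real n + real l) *\<^sub>R (\<delta> (a*a) + 2 *\<^sub>R \<delta> a + c) = real m *\<^sub>R ((\<delta> a + c)*(a+1)) + real n *\<^sub>R ((a+1)*(\<delta> a+c)) + real l *\<^sub>R ((a+1)*c*(a+1))"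
      using Hx[OF a1] unfolding eq1 eq2 .
    show ?thesis using lin_lemma[OF h1 Hx[OF a]] unfolding t_def .
  qed
  have quad: "c*(a*a) + (a*a)*c = 2 *\<^sub>R (a*c*a)" if a: "a \<in> \<A>" for a
  proof -
    have aa: "a*a \<in> \<A>" using a mulA by blast
    have "((real m + real l)*(real n + real l)) *\<^sub>R (c*(a*a) + (a*a)*c) = ((real m + real l)*(real n + real l)) *\<^sub>R (2 *\<^sub>R (a*c*a))"
      using quad_lemma[OF lin[OF a, unfolded t_def] lin[OF aa, unfolded t_def] Hx[OF a]] .
    moreover have "(real m + real l)*(real n + real l) \<noteq> 0" using assms(1,2) by simp
    ultimately show ?thesis using scaleR_cancel_left by blast
  qed
  have unit_comm: "c * e k p = e k p * c" if p: "p \<in> mu_idx (r k) (d k)" and pA: "e k p \<in> \<A>" for k p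
  proof -
    obtain s i j where pij: "p = (s,i,j)" by (cases p) auto
    have sij: "s < r k" "i < d k s" "j < d k s" using p pij unfolding mu_idx_def by auto
    have mult: "\<And>s i j s' i' j'. (s, i, j) \<in> mu_idx (r k) (d k) \<Longrightarrow> (s', i', j') \<in> mu_idx (r k) (d k) \<Longrightarrow>
         e k (s, i, j) * e k (s', i', j') = (if s = s' \<and> j = i' then e k (s, i, j') else 0)"
      using mu[of k] unfolding matrix_units_def by blast
    have jj: "(s,j,j) \<in> mu_idx (r k) (d k)" using sij unfolding mu_idx_def by auto
    have qA: "e k (s,j,j) \<in> \<A>" using diag sij unfolding mu_diag_def by blast
    have qq: "e k (s,j,j) * e k (s,j,j) = e k (s,j,j)" using mult[OF jj jj] by simp
    have cq: "c * e k (s,j,j) = e k (s,j,j) * c"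
      using proj_comm[OF qq quad[OF qA]] .
    show ?thesis
    proof (cases "i = j")
      case True
      then show ?thesis using cq pij by simp
    next
      case False
      have pm: "(s,i,j) \<in> mu_idx (r k) (d k)" using p pij by simp
      have xx: "e k (s,i,j) * e k (s,i,j) = 0" using mult[OF pm pm] False by simp
      have xq: "e k (s,i,j) * e k (s,j,j) = e k (s,i,j)" using mult[OF pm jj] by simp
      have qx: "e k (s,j,j) * e k (s,i,j) = 0" using mult[OF jj pm] False by simp
      have xA: "e k (s,i,j) \<in> \<A>" using pA pij by simp
      have "c * e k (s,i,j) = e k (s,i,j) * c"
        using off_comm[OF xx qq xq qx cq quad[OF xA] quad[OF addA[OF xA qA]]] .
      then show ?thesis using pij by simp
    qed
  qed
  have span_comm: "c * x = x * c" if x: "x \<in> cspan (e k ` mu_idx (r k) (d k) \<inter> \<A>)" for k x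
  proof -
    obtain F cc where F: "finite F" "F \<subseteq> e k ` mu_idx (r k) (d k) \<inter> \<A>" and xs: "x = (\<Sum>s\<in>F. cmult (cc s) s)"
      using x unfolding cspan_def by blast
    have "\<forall>s\<in>F. c * s = s * c" using F(2) unit_comm by blast
    hence "c * (\<Sum>s\<in>F. cmult (cc s) s) = (\<Sum>s\<in>F. cmult (cc s) s) * c"
      by (simp add: sum_distrib_left sum_distrib_right mult_cmult_left mult_cmult_right)
    thus ?thesis using xs by simp
  qed
  have closedC: "closed {x::'a. c * x = x * c}"
    by (intro closed_Collect_eq continuous_intros)
  have "(\<Union>k. \<A> \<inter> af_block r d e k) \<subseteq> {x. c * x = x * c}"
    using span_comm blk by blast
  hence "\<A> \<subseteq> {x. c * x = x * c}"
    using closure_minimal[OF _ closedC] dense by metis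
  hence comm: "c * x = x * c" if "x \<in> \<A>" for x using that by blast
  have dl: "\<delta> a = c * a" if a: "a \<in> \<A>" for a
  proof -
    have "t *\<^sub>R \<delta> a = ((real m + real l) + (real n + real l)) *\<^sub>R (c*a)"
      using lin[OF a] comm[OF a] by (simp only: scaleR_add_left)
    also have "\<dots> = t *\<^sub>R (c*a)" unfolding t_def by (simp add: algebra_simps)
    finally show ?thesis using tpos by simp
  qed
  show ?thesis
  proof (intro ballI conjI)
    fix a b assume a: "a \<in> \<A>" and b: "b \<in> \<A>"
    show "\<delta> (a * b) = \<delta> a * b" using dl[OF mulA[OF a b]] dl[OF a] by (simp add: mult.assoc)
    show "\<delta> a * b = a * \<delta> b" using dl[OF a] dl[OF b] comm[OF a] by (metis mult.assoc)
  qed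
qed

end
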